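(* Let $T$ be a tree with exactly three pendant vertices and major vertex $m$. Then $1$ is an eigenvalue of $L(T)$ if and only if one of the following holds: (1) there are two distinct pendant vertices $u_1,u_2$ with $d(u_1,m)\equiv d(u_2,m)\equiv 1\pmod 3$; or (2) the pendant vertices can be labelled $u_1,u_2,u_3$ so that $d(u_1,m)\equiv 2$, $d(u_2,m)\equiv 0$ and $d(u_3,m)\equiv 0\pmod 3$.
   Context: $L(T)=D(T)-A(T)$ is the Laplacian matrix of $T$. A pendant vertex has degree $1$; a major vertex has degree at least $3$. $d$ denotes distance. *)

theory Defs
  imports "HOL-Analysis.Analysis"
begin

definition simple_graph :: "('n \<Rightarrow> 'n \<Rightarrow> bool) \<Rightarrow> bool" where
  "simple_graph E \<longleftrightarrow> (\<forall>u v. E u v \<longrightarrow> E v u) \<and> (\<forall>v. \<not> E v v)"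

definition walk :: "('n \<Rightarrow> 'n \<Rightarrow> bool) \<Rightarrow> 'n list \<Rightarrow> bool" where
  "walk E xs \<longleftrightarrow> xs \<noteq> [] \<and> (\<forall>i. Suc i < length xs \<longrightarrow> E (xs ! i) (xs ! Suc i))"

definition connected_graph :: "('n \<Rightarrow> 'n \<Rightarrow> bool) \<Rightarrow> bool" where
  "connected_graph E \<longleftrightarrow> (\<forall>u v. \<exists>xs. walk E xs \<and> hd xs = u \<and> last xs = v)"

definition has_cycle :: "('n \<Rightarrow> 'n \<Rightarrow> bool) \<Rightarrow> bool" where
  "has_cycle E \<longleftrightarrow> (\<exists>xs. 3 \<le> length xs \<and> distinct xs \<and> walk E xs \<and> E (last xs) (hd xs))"

definition is_tree :: "('n \<Rightarrow> 'n \<Rightarrow> bool) \<Rightarrow> bool" where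
  "is_tree E \<longleftrightarrow> simple_graph E \<and> connected_graph E \<and> \<not> has_cycle E"

definition degree :: "('n::finite \<Rightarrow> 'n \<Rightarrow> bool) \<Rightarrow> 'n \<Rightarrow> nat" where
  "degree E v = card {w. E v w}"

definition pendant :: "('n::finite \<Rightarrow> 'n \<Rightarrow> bool) \<Rightarrow> 'n \<Rightarrow> bool" where
  "pendant E v \<longleftrightarrow> degree E v = 1"

definition major :: "('n::finite \<Rightarrow> 'n \<Rightarrow> bool) \<Rightarrow> 'n \<Rightarrow> bool" where
  "major E v \<longleftrightarrow> degree E v \<ge> 3"

definition gdist :: "('n \<Rightarrow> 'n \<Rightarrow> bool) \<Rightarrow> 'n \<Rightarrow> 'n \<Rightarrow> nat" where
  "gdist E u v = (LEAST n. \<exists>xs. walk E xs \<and> hd xs = u \<and> last xs = v \<and> length xs = Suc n)"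

definition laplacian :: "('n::finite \<Rightarrow> 'n \<Rightarrow> bool) \<Rightarrow> real^'n^'n" where
  "laplacian E = (\<chi> i j. (if i = j then real (degree E i) else 0) - (if E i j then 1 else 0))"

definition is_eigenvalue :: "real^'n^'n \<Rightarrow> real \<Rightarrow> bool" where
  "is_eigenvalue A c \<longleftrightarrow> (\<exists>x. x \<noteq> 0 \<and> A *v x = c *\<^sub>R x)"

end

theory Submission
  imports Defs "HOL-Library.Sublist"
begin

lemma walk_Nil[simp]: "\<not> walk E []"
  by (simp add: walk_def)

lemma walk_single[simp]: "walk E [x]"
  by (simp add: walk_def)

lemma walk_Cons2[simp]: "walk E (x#y#xs) \<longleftrightarrow> E x y \<and> walk E (y#xs)"
proof
  assume h: "walk E (x#y#xs)"
  have "E x y" using h[unfolded walk_def, THEN conjunct2, rule_format, of 0] by simp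
  moreover have "walk E (y#xs)" unfolding walk_def
  proof (intro conjI allI impI)
    fix i assume "Suc i < length (y#xs)"
    then show "E ((y#xs)!i) ((y#xs)!Suc i)" using h[unfolded walk_def, THEN conjunct2, rule_format, of "Suc i"]
      by simp
  qed simp
  ultimately show "E x y \<and> walk E (y#xs)" by simp
next
  assume h: "E x y \<and> walk E (y#xs)"
  show "walk E (x#y#xs)" unfolding walk_def
  proof (intro conjI allI impI)
    fix i assume "Suc i < length (x#y#xs)"
    then show "E ((x#y#xs)!i) ((x#y#xs)!Suc i)" using h unfolding walk_def
      by (cases i) auto
  qed simp
qed

lemma walk_ConsD: "walk E (x#xs) \<Longrightarrow> xs \<noteq> [] \<Longrightarrow> walk E xs"
  by (cases xs) auto

lemma walk_join: "walk E xs \<Longrightarrow> walk E ys \<Longrightarrow> last xs = hd ys \<Longrightarrow> walk E (xs @ tl ys)"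
proof (induction xs rule: induct_list012)
  case 1 then show ?case by simp
next
  case (2 x) then show ?case by (cases ys) auto
next
  case (3 x y zs) then show ?case by auto
qed

lemma walk_app: "walk E xs \<Longrightarrow> walk E ys \<Longrightarrow> E (last xs) (hd ys) \<Longrightarrow> walk E (xs @ ys)"
proof (induction xs rule: induct_list012)
  case 1 then show ?case by simp
next
  case (2 x) then show ?case by (cases ys) auto
next
  case (3 x y zs) then show ?case by auto
qed

lemma walk_appD1: "walk E (xs @ ys) \<Longrightarrow> xs \<noteq> [] \<Longrightarrow> walk E xs"
proof (induction xs rule: induct_list012)
  case (3 x y zs) then show ?case by auto
qed auto

lemma walk_appD2: "walk E (xs @ ys) \<Longrightarrow> ys \<noteq> [] \<Longrightarrow> walk E ys"
proof (induction xs)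
  case (Cons x xs) then show ?case
    using walk_ConsD[of E x "xs@ys"] by auto
qed auto

lemma walk_rev: "(\<And>u v. E u v \<Longrightarrow> E v u) \<Longrightarrow> walk E xs \<Longrightarrow> walk E (rev xs)"
proof (induction xs rule: induct_list012)
  case (3 x y zs)
  then have "walk E (rev (y#zs))" by auto
  moreover have "E (last (rev (y#zs))) (hd [x])" using 3 by auto
  ultimately show ?case using walk_app[of E "rev (y#zs)" "[x]"] by simp
qed auto

lemma walk_take: "walk E xs \<Longrightarrow> 0 < n \<Longrightarrow> walk E (take n xs)"
  unfolding walk_def by auto

lemma walk_drop: "walk E xs \<Longrightarrow> n < length xs \<Longrightarrow> walk E (drop n xs)"
  unfolding walk_def by auto

definition tpath :: "('n \<Rightarrow> 'n \<Rightarrow> bool) \<Rightarrow> 'n list \<Rightarrow> bool" where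
  "tpath E xs \<longleftrightarrow> walk E xs \<and> distinct xs"

lemma walk_to_path:
  assumes "walk E xs"
  shows "\<exists>ys. tpath E ys \<and> hd ys = hd xs \<and> last ys = last xs \<and> set ys \<subseteq> set xs \<and> length ys \<le> length xs"
  using assms
proof (induction "length xs" arbitrary: xs rule: less_induct)
  case less
  show ?case
  proof (cases "distinct xs")
    case True then show ?thesis using less.prems by (auto simp: tpath_def)
  next
    case False
    then obtain p y q r where xs: "xs = p @ [y] @ q @ [y] @ r" using not_distinct_decomp by blast
    define zs where "zs = p @ [y] @ r"
    have w1: "walk E (p @ [y])" using less.prems xs walk_appD1[of E "p@[y]" "q @ [y] @ r"] by simp
    have w2: "walk E ([y] @ r)" using less.prems xs walk_appD2[of E "p @ [y] @ q" "[y] @ r"] by simp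
    have wz: "walk E zs" using walk_join[OF w1 w2] by (simp add: zs_def)
    have "length zs < length xs" by (simp add: zs_def xs)
    then obtain ys where ys: "tpath E ys" "hd ys = hd zs" "last ys = last zs" "set ys \<subseteq> set zs" "length ys \<le> length zs"
      using less.hyps wz by blast
    have "hd zs = hd xs" by (cases p) (auto simp: zs_def xs)
    moreover have "last zs = last xs" by (cases r) (auto simp: zs_def xs)
    moreover have "set zs \<subseteq> set xs" by (auto simp: zs_def xs)
    ultimately show ?thesis using ys \<open>length zs < length xs\<close>
      by (intro exI[of _ ys]) auto
  qed
qed

lemma walk_last_edge: "walk E (xs @ [b]) \<Longrightarrow> xs \<noteq> [] \<Longrightarrow> E (last xs) b"
proof (induction xs rule: induct_list012)
  case (3 x y zs) then show ?case by auto
qed auto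

lemma distinct_hd_last: "distinct xs \<Longrightarrow> hd xs = last xs \<Longrightarrow> xs \<noteq> [] \<Longrightarrow> length xs = 1"
proof (cases xs)
  case (Cons a ys)
  assume d: "distinct xs" and h: "hd xs = last xs"
  show ?thesis
  proof (cases ys)
    case (Cons b zs)
    then have "last xs \<in> set ys" using \<open>xs = a # ys\<close> by simp
    then show ?thesis using d h \<open>xs = a # ys\<close> by simp
  qed (simp add: \<open>xs = a # ys\<close>)
qed simp

locale tree_loc =
  fixes E :: "'n::finite \<Rightarrow> 'n \<Rightarrow> bool" and r :: 'n
  assumes sym: "E u v \<Longrightarrow> E v u" and irr: "\<not> E v v"
    and conn: "connected_graph E" and acyc: "\<not> has_cycle E"
begin

lemma path_unique:
  "tpath E P \<Longrightarrow> tpath E Q \<Longrightarrow> hd P = hd Q \<Longrightarrow> last P = last Q \<Longrightarrow> P = Q"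
proof (induction "length P" arbitrary: P Q rule: less_induct)
  case less
  have Pne: "P \<noteq> []" and Qne: "Q \<noteq> []" using less.prems by (auto simp: tpath_def)
  show ?case
  proof (cases "length P = 1 \<or> length Q = 1")
    case True
    then show ?thesis
    proof
      assume "length P = 1"
      then obtain a where P: "P = [a]" by (metis One_nat_def length_0_conv length_Suc_conv)
      then have "length Q = 1" using less.prems distinct_hd_last[of Q] Qne by (auto simp: tpath_def)
      then obtain b where "Q = [b]" by (metis One_nat_def length_0_conv length_Suc_conv)
      then show ?thesis using P less.prems by simp
    next
      assume "length Q = 1"
      then obtain a where Q: "Q = [a]" by (metis One_nat_def length_0_conv length_Suc_conv)
      then have "length P = 1" using less.prems distinct_hd_last[of P] Pne by (auto simp: tpath_def)
      then obtain b where "P = [b]" by (metis One_nat_def length_0_conv length_Suc_conv)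
      then show ?thesis using Q less.prems by simp
    qed
  next
    case False
    obtain P' b where P: "P = P' @ [b]" using Pne rev_exhaust by blast
    obtain Q' b' where Q: "Q = Q' @ [b']" using Qne rev_exhaust by blast
    have bb: "b' = b" using less.prems P Q by simp
    have P'ne: "P' \<noteq> []" using False P by auto
    have Q'ne: "Q' \<noteq> []" using False Q by auto
    have pP': "tpath E P'" using less.prems(1) P P'ne walk_appD1 by (auto simp: tpath_def)
    have pQ': "tpath E Q'" using less.prems(2) Q Q'ne walk_appD1 by (auto simp: tpath_def)
    have hP': "hd P' = hd P" using P P'ne by simp
    have hQ': "hd Q' = hd Q" using Q Q'ne by simp
    show ?thesis
    proof (cases "last P' = last Q'")
      case True
      have "P' = Q'" using less.hyps[of P' Q'] P pP' pQ' hP' hQ' less.prems True by simp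
      then show ?thesis using P Q bb by simp
    next
      case False
      define W where "W = rev P' @ tl Q'"
      have wW: "walk E W" unfolding W_def
        using walk_join[OF walk_rev[OF _ _] _, of E P' Q'] sym pP' pQ' hP' hQ' less.prems(3)
        by (auto simp: tpath_def last_rev)
      have hW: "hd W = last P'" using P'ne by (simp add: W_def hd_rev)
      have lW: "last W = last Q'"
      proof (cases "tl Q' = []")
        case True
        then have "Q' = [hd Q']" using Q'ne by (metis list.collapse)
        then show ?thesis using True hP' hQ' less.prems(3) P'ne by (simp add: W_def last_rev)
      next
        case False
        then show ?thesis by (simp add: W_def last_tl)
      qed
      have sW: "set W \<subseteq> set P' \<union> set Q'" using list.set_sel(2)[OF Q'ne] by (auto simp: W_def)
      obtain R where R: "tpath E R" "hd R = last P'" "last R = last Q'" "set R \<subseteq> set W"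
        using walk_to_path[OF wW] hW lW by auto
      have bR: "b \<notin> set R" using R(4) sW less.prems(1,2) P Q bb by (auto simp: tpath_def)
      have Rne: "R \<noteq> []" using R(1) by (auto simp: tpath_def)
      have "length R \<noteq> 1" using R False Rne
        by (metis One_nat_def length_0_conv length_Suc_conv last.simps list.sel(1))
      then have lR: "length R \<ge> 2" using Rne by (cases R) (auto simp: Suc_le_eq)
      obtain p R' where R': "R = p # R'" using Rne list.exhaust by blast
      have e1: "E b p"
        using walk_last_edge[of E P' b] less.prems(1) P P'ne R(2) R' sym by (auto simp: tpath_def)
      have e2: "E (last Q') b"
        using walk_last_edge[of E Q' b] less.prems(2) Q Q'ne bb by (auto simp: tpath_def)
      have "has_cycle E"
        unfolding has_cycle_def
      proof (intro exI[of _ "b # R"] conjI)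
        show "3 \<le> length (b # R)" using lR by simp
        show "distinct (b # R)" using bR R(1) by (simp add: tpath_def)
        show "walk E (b # R)" using R(1) R' e1 by (simp add: tpath_def)
        show "E (last (b # R)) (hd (b # R))" using e2 R(3) Rne by simp
      qed
      then show ?thesis using acyc by simp
    qed
  qed
qed

end

lemma distinct_nth_notin_take:
  assumes "distinct xs" "j < length xs" "n \<le> j"
  shows "xs ! j \<notin> set (take n xs)"
proof
  assume "xs ! j \<in> set (take n xs)"
  then obtain i where i: "i < length (take n xs)" "take n xs ! i = xs ! j" by (auto simp: in_set_conv_nth)
  then have "i < n" "xs ! i = xs ! j" by auto
  then have "i = j" using nth_eq_iff_index_eq[OF assms(1)] i assms by auto
  then show False using \<open>i < n\<close> assms by simp
qed

context tree_loc
begin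

definition pi :: "'n \<Rightarrow> 'n list" where
  "pi v = (THE p. tpath E p \<and> hd p = r \<and> last p = v)"

lemma pi_ex: "\<exists>p. tpath E p \<and> hd p = r \<and> last p = v"
proof -
  obtain xs where "walk E xs" "hd xs = r" "last xs = v" using conn unfolding connected_graph_def by blast
  then obtain ys where "tpath E ys" "hd ys = hd xs" "last ys = last xs"
    using walk_to_path[of E xs] by blast
  then show ?thesis using \<open>hd xs = r\<close> \<open>last xs = v\<close> by auto
qed

lemma pi_ex1: "\<exists>!p. tpath E p \<and> hd p = r \<and> last p = v"
proof -
  obtain p where "tpath E p \<and> hd p = r \<and> last p = v" using pi_ex by blast
  moreover have "q = p" if "tpath E q \<and> hd q = r \<and> last q = v" for q
    using path_unique[of q p] that calculation by simp
  ultimately show ?thesis by blast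
qed

lemma pi: "tpath E (pi v)" "hd (pi v) = r" "last (pi v) = v"
  using theI'[OF pi_ex1[of v]] unfolding pi_def by auto

lemma pi_eq: "tpath E p \<Longrightarrow> hd p = r \<Longrightarrow> last p = v \<Longrightarrow> pi v = p"
  using path_unique[OF _ pi(1)[of v]] pi(2,3)[of v] by simp

lemma pi_ne: "pi v \<noteq> []"
  using pi(1)[of v] by (auto simp: tpath_def)

lemma pi_dist: "distinct (pi v)"
  using pi(1)[of v] by (auto simp: tpath_def)

lemma pi_walk: "walk E (pi v)"
  using pi(1)[of v] by (auto simp: tpath_def)

lemma pi_root: "pi r = [r]"
  by (rule pi_eq) (auto simp: tpath_def)

lemma pi_len1: "length (pi v) = 1 \<longleftrightarrow> v = r"
proof
  assume "length (pi v) = 1"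
  then obtain x where "pi v = [x]" by (auto simp: length_Suc_conv)
  then show "v = r" using pi(2,3)[of v] by simp
qed (simp add: pi_root)

lemma pi_len2: "v \<noteq> r \<Longrightarrow> length (pi v) \<ge> 2"
  using pi_len1[of v] pi_ne[of v] by (cases "pi v") (auto simp: Suc_le_eq)

lemma pi_nth0: "pi v ! 0 = r"
  using pi(2)[of v] pi_ne[of v] by (simp add: hd_conv_nth)

lemma pi_nth_last: "pi v ! (length (pi v) - 1) = v"
  using pi(3)[of v] pi_ne[of v] by (simp add: last_conv_nth)

lemma pi_take: "i < length (pi v) \<Longrightarrow> pi (pi v ! i) = take (Suc i) (pi v)"
proof (rule pi_eq)
  assume i: "i < length (pi v)"
  show "tpath E (take (Suc i) (pi v))"
    using walk_take[OF pi_walk[of v], of "Suc i"] pi_dist[of v] by (simp add: tpath_def)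
  show "hd (take (Suc i) (pi v)) = r" using pi(2)[of v] by simp
  show "last (take (Suc i) (pi v)) = pi v ! i" using i by (simp add: take_Suc_conv_app_nth)
qed

lemma pi_edge:
  assumes "E v w"
  shows "pi w = pi v @ [w] \<or> pi v = pi w @ [v]"
proof (cases "w \<in> set (pi v)")
  case False
  have "tpath E (pi v @ [w])"
    using walk_app[OF pi_walk[of v], of "[w]"] pi(3)[of v] assms pi_dist[of v] False
    by (auto simp: tpath_def)
  then have "pi w = pi v @ [w]" by (rule pi_eq) (use pi_ne[of v] pi(2)[of v] in auto)
  then show ?thesis ..
next
  case True
  then obtain i where i: "i < length (pi v)" "pi v ! i = w" by (auto simp: in_set_conv_nth)
  define k where "k = length (pi v)"
  have "i \<noteq> k - 1" using pi_nth_last[of v] i assms irr by (auto simp: k_def)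
  then have ik: "Suc i \<le> k - 1" using i by (simp add: k_def)
  have wt: "walk E (take (Suc i) (pi v))" using walk_take[OF pi_walk] by simp
  have lt: "last (take (Suc i) (pi v)) = w" using i by (simp add: take_Suc_conv_app_nth)
  have vn: "v \<notin> set (take (Suc i) (pi v))"
    using distinct_nth_notin_take[OF pi_dist[of v], of "k - 1" "Suc i"] pi_nth_last[of v] ik pi_ne[of v]
    by (simp add: k_def)
  have "tpath E (take (Suc i) (pi v) @ [v])"
    using walk_app[OF wt, of "[v]"] lt sym[OF assms] vn pi_dist[of v]
    by (auto simp: tpath_def)
  then have "pi v = take (Suc i) (pi v) @ [v]" by (rule pi_eq) (use pi(2)[of v] pi_ne[of v] in auto)
  moreover have "pi w = take (Suc i) (pi v)" using pi_take[OF i(1)] i(2) by simp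
  ultimately show ?thesis by simp
qed

definition ch :: "'n \<Rightarrow> 'n set" where
  "ch v = {w. pi w = pi v @ [w]}"

definition par :: "'n \<Rightarrow> 'n" where
  "par v = pi v ! (length (pi v) - 2)"

lemma pi_par: "v \<noteq> r \<Longrightarrow> pi v = pi (par v) @ [v]"
proof -
  assume "v \<noteq> r"
  then have l: "length (pi v) \<ge> 2" by (rule pi_len2)
  have "pi (par v) = take (length (pi v) - 1) (pi v)"
  proof -
    have e: "Suc (length (pi v) - 2) = length (pi v) - 1" using l by arith
    show ?thesis unfolding par_def using pi_take[of "length (pi v) - 2" v] l e by simp
  qed
  also have "\<dots> = butlast (pi v)" by (simp add: butlast_conv_take)
  finally show ?thesis using pi(3)[of v] pi_ne[of v] append_butlast_last_id[of "pi v"] by simp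
qed

lemma ch_edge: "w \<in> ch v \<Longrightarrow> E v w"
  using walk_last_edge[of E "pi v" w] pi_walk[of w] pi(3)[of v] pi_ne[of v] by (auto simp: ch_def)

lemma par_edge: "v \<noteq> r \<Longrightarrow> E (par v) v"
  using walk_last_edge[of E "pi (par v)" v] pi_walk[of v] pi(3)[of "par v"] pi_ne[of "par v"] pi_par[of v]
  by auto

lemma par_notin_ch: "v \<noteq> r \<Longrightarrow> par v \<notin> ch v"
proof
  assume "v \<noteq> r" "par v \<in> ch v"
  then have "pi (par v) = pi v @ [par v]" "pi v = pi (par v) @ [v]" using pi_par[of v] by (auto simp: ch_def)
  then have "length (pi (par v)) = length (pi (par v)) + 2" by simp
  then show False by simp
qed

lemma nbrs: "{w. E v w} = ch v \<union> (if v = r then {} else {par v})"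
proof (intro equalityI subsetI)
  fix w assume "w \<in> {w. E v w}"
  then have e: "E v w" by simp
  show "w \<in> ch v \<union> (if v = r then {} else {par v})"
  proof (cases "pi w = pi v @ [w]")
    case True then show ?thesis by (simp add: ch_def)
  next
    case False
    then have pv: "pi v = pi w @ [v]" using pi_edge[OF e] by simp
    then have "v \<noteq> r" using pi_root pi_ne[of w] by auto
    then have "pi w = pi (par v)" using pv pi_par[of v] by simp
    then have "w = par v" using pi(3) by metis
    then show ?thesis using \<open>v \<noteq> r\<close> by simp
  qed
next
  fix w assume "w \<in> ch v \<union> (if v = r then {} else {par v})"
  then have "w \<in> ch v \<or> (v \<noteq> r \<and> w = par v)" by (auto split: if_splits)
  then show "w \<in> {w. E v w}"
  proof
    assume "w \<in> ch v" then show ?thesis using ch_edge by simp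
  next
    assume "v \<noteq> r \<and> w = par v" then show ?thesis using par_edge[of v] sym[of w v] by simp
  qed
qed

lemma ch_root: "w \<in> ch r \<longleftrightarrow> pi w = [r, w]"
  by (simp add: ch_def pi_root)

end

lemma prefix_nth_eq: "prefix xs ys \<Longrightarrow> i < length xs \<Longrightarrow> ys ! i = xs ! i"
  by (auto simp: prefix_def nth_append)

lemma prefix_same_len: "prefix xs ys \<Longrightarrow> length xs = length ys \<Longrightarrow> xs = ys"
  by (auto simp: prefix_def)

lemma take2: "length xs \<ge> 2 \<Longrightarrow> take 2 xs = [xs ! 0, xs ! 1]"
  by (cases xs; cases "tl xs") auto

context tree_loc
begin

lemma fin_nbrs: "finite (A::'n set)" by simp

lemma deg_eq: "degree E v = card (ch v) + (if v = r then 0 else 1)"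
proof -
  have "degree E v = card (ch v \<union> (if v = r then {} else {par v}))"
    unfolding degree_def using nbrs[of v] by simp
  also have "\<dots> = card (ch v) + (if v = r then 0 else 1)"
    using par_notin_ch[of v] by (auto simp: card_insert_if)
  finally show ?thesis .
qed

lemma len_pi_bound: "length (pi y) \<le> card (UNIV :: 'n set)"
  using distinct_card[OF pi_dist[of y]] card_mono[of UNIV "set (pi y)"] by simp

lemma leaf_ex: "\<exists>y. prefix (pi v) (pi y) \<and> ch y = {}"
proof -
  let ?P = "\<lambda>n. \<exists>y. prefix (pi v) (pi y) \<and> length (pi y) = n"
  have p0: "?P (length (pi v))" by (intro exI[of _ v]) simp
  have p1: "\<forall>n. ?P n \<longrightarrow> n \<le> card (UNIV :: 'n set)" using len_pi_bound by auto
  obtain n where n: "?P n" "\<forall>k. ?P k \<longrightarrow> k \<le> n"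
    using Nat.ex_has_greatest_nat[of ?P, OF p0 p1] by blast
  then obtain y where y: "prefix (pi v) (pi y)" "length (pi y) = n" by blast
  have "ch y = {}"
  proof (rule ccontr)
    assume "ch y \<noteq> {}"
    then obtain c where "pi c = pi y @ [c]" by (auto simp: ch_def)
    then have "?P (Suc n)" using y by (intro exI[of _ c]) auto
    then have "Suc n \<le> n" using n(2) by blast
    then show False by simp
  qed
  then show ?thesis using y by blast
qed

definition lf :: "'n \<Rightarrow> 'n" where
  "lf v = (SOME y. prefix (pi v) (pi y) \<and> ch y = {})"

lemma lf: "prefix (pi v) (pi (lf v))" "ch (lf v) = {}"
  using someI_ex[OF leaf_ex[of v]] unfolding lf_def by auto

lemma pendant_iff: "\<not> pendant E r \<Longrightarrow> pendant E y \<longleftrightarrow> y \<noteq> r \<and> ch y = {}"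
  unfolding pendant_def using deg_eq[of y] by (auto simp: card_eq_0_iff)

lemma lf_ne_root: "v \<noteq> r \<Longrightarrow> lf v \<noteq> r"
proof
  assume "v \<noteq> r" "lf v = r"
  then have "length (pi v) \<le> length (pi r)" using prefix_length_le[OF lf(1)[of v]] by simp
  then show False using pi_len2[OF \<open>v \<noteq> r\<close>] pi_root by simp
qed

definition inc :: "'n \<Rightarrow> 'n \<Rightarrow> bool" where
  "inc a b \<longleftrightarrow> \<not> prefix (pi a) (pi b) \<and> \<not> prefix (pi b) (pi a)"

lemma inc_lf: "inc a b \<Longrightarrow> lf a \<noteq> lf b"
proof
  assume "inc a b" "lf a = lf b"
  then show False using prefix_same_cases[OF lf(1)[of a], of "pi b"] lf(1)[of b] unfolding inc_def by simp
qed

lemma same_len_inc: "length (pi a) = length (pi b) \<Longrightarrow> a \<noteq> b \<Longrightarrow> inc a b"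
proof -
  assume l: "length (pi a) = length (pi b)" and ab: "a \<noteq> b"
  have "pi a \<noteq> pi b" using ab pi(3)[of a] pi(3)[of b] by auto
  then show ?thesis unfolding inc_def using prefix_same_len[of "pi a" "pi b"] prefix_same_len[of "pi b" "pi a"] l by auto
qed

lemma card_inc_le:
  assumes "\<not> pendant E r" "\<And>a. a \<in> A \<Longrightarrow> a \<noteq> r" "\<And>a b. a \<in> A \<Longrightarrow> b \<in> A \<Longrightarrow> a \<noteq> b \<Longrightarrow> inc a b"
  shows "card A \<le> card {v. pendant E v}"
proof (rule card_inj_on_le[of lf])
  show "inj_on lf A" using assms(3) inc_lf unfolding inj_on_def by blast
  show "lf ` A \<subseteq> {v. pendant E v}"
  proof
    fix y assume "y \<in> lf ` A"
    then obtain a where a: "a \<in> A" "y = lf a" by blast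
    have "lf a \<noteq> r" using lf_ne_root assms(2)[OF a(1)] by blast
    then show "y \<in> {v. pendant E v}" using pendant_iff[OF assms(1), of "lf a"] lf(2)[of a] a by simp
  qed
qed simp

lemma gdist_pi: "gdist E v r = length (pi v) - 1"
proof -
  let ?Q = "\<lambda>n. \<exists>xs. walk E xs \<and> hd xs = v \<and> last xs = r \<and> length xs = Suc n"
  have q: "?Q (length (pi v) - 1)"
    using walk_rev[OF sym pi_walk[of v]] pi(2,3)[of v] pi_ne[of v]
    by (intro exI[of _ "rev (pi v)"]) (auto simp: hd_rev last_rev)
  then have le: "gdist E v r \<le> length (pi v) - 1" unfolding gdist_def by (rule Least_le)
  have "?Q (gdist E v r)" unfolding gdist_def using q by (rule LeastI)
  then obtain xs where xs: "walk E xs" "hd xs = v" "last xs = r" "length xs = Suc (gdist E v r)" by blast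
  then obtain ys where ys: "tpath E ys" "hd ys = v" "last ys = r" "length ys \<le> length xs"
    using walk_to_path[OF xs(1)] by auto
  have yne: "ys \<noteq> []" using ys(1) by (auto simp: tpath_def)
  have "tpath E (rev ys)" using ys(1) walk_rev[OF sym, where xs=ys] by (auto simp: tpath_def)
  then have "pi v = rev ys" by (rule pi_eq) (use ys yne in \<open>auto simp: hd_rev last_rev\<close>)
  then have "length (pi v) \<le> Suc (gdist E v r)" using ys(4) xs(4) by simp
  then show ?thesis using le by simp
qed

end

locale spider = tree_loc E r for E :: "'n::finite \<Rightarrow> 'n \<Rightarrow> bool" and r :: 'n +
  assumes card3: "card {v. pendant E v} = 3" and maj: "major E r"
begin

abbreviation "Pd \<equiv> {v. pendant E v}"

lemma notpr: "\<not> pendant E r"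
  using maj unfolding major_def pendant_def by simp

lemma pd: "y \<in> Pd \<Longrightarrow> y \<noteq> r \<and> ch y = {}"
  using pendant_iff[OF notpr] by simp

lemma chr_ne: "w \<in> ch r \<Longrightarrow> w \<noteq> r"
  using ch_root[of w] pi_root by auto

lemma chr_len: "w \<in> ch r \<Longrightarrow> length (pi w) = 2"
  using ch_root[of w] by simp

lemma inc_sym: "inc a b \<Longrightarrow> inc b a"
  unfolding inc_def by blast

lemma chr_inc: "a \<in> ch r \<Longrightarrow> b \<in> ch r \<Longrightarrow> a \<noteq> b \<Longrightarrow> inc a b"
  using same_len_inc chr_len by simp

lemma card_chr: "card (ch r) = 3"
proof -
  have "card (ch r) \<le> 3"
    using card_inc_le[OF notpr, of "ch r"] chr_ne chr_inc card3 by simp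
  moreover have "card (ch r) \<ge> 3" using maj deg_eq[of r] unfolding major_def by simp
  ultimately show ?thesis by simp
qed

lemma pi1_chr: "v \<noteq> r \<Longrightarrow> pi v ! 1 \<in> ch r"
proof -
  assume "v \<noteq> r"
  then have l: "length (pi v) \<ge> 2" by (rule pi_len2)
  have "pi (pi v ! 1) = take 2 (pi v)" using pi_take[of 1 v] l by (simp add: numeral_2_eq_2)
  also have "\<dots> = [r, pi v ! 1]" using take2[OF l] pi_nth0[of v] by simp
  finally show ?thesis using ch_root by simp
qed

lemma one_child:
  assumes vr: "v \<noteq> r" and c1: "c1 \<in> ch v" and c2: "c2 \<in> ch v"
  shows "c1 = c2"
proof (rule ccontr)
  assume ne: "c1 \<noteq> c2"
  define b where "b = pi v ! 1"
  have l: "length (pi v) \<ge> 2" using vr by (rule pi_len2)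
  have bch: "b \<in> ch r" unfolding b_def using pi1_chr[OF vr] .
  have pc: "pi c = pi v @ [c]" if "c \<in> {c1, c2}" for c using that c1 c2 by (auto simp: ch_def)
  have lc: "length (pi c) \<ge> 3" if "c \<in> {c1, c2}" for c using pc[OF that] l by simp
  have c1b: "pi c ! 1 = b" if "c \<in> {c1, c2}" for c using pc[OF that] l by (simp add: b_def nth_append)
  define S where "S = {c1, c2} \<union> (ch r - {b})"
  have nc: "c \<notin> ch r" if "c \<in> {c1, c2}" for c
  proof
    assume "c \<in> ch r" then have "length (pi c) = 2" by (rule chr_len)
    then show False using lc[OF that] by simp
  qed
  have disj: "{c1, c2} \<inter> (ch r - {b}) = {}" using nc by blast
  have "card S = card {c1, c2} + card (ch r - {b})"
    unfolding S_def using card_Un_disjoint[of "{c1, c2}" "ch r - {b}"] disj by simp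
  also have "\<dots> = 4" using ne card_chr bch by simp
  finally have c4: "card S = 4" .
  have "card S \<le> 3"
  proof -
    have "card S \<le> card Pd"
    proof (rule card_inc_le[OF notpr])
      fix a assume "a \<in> S"
      then show "a \<noteq> r"
      proof (cases "a \<in> {c1, c2}")
        case True then show ?thesis using lc[OF True] pi_root by auto
      next
        case False then show ?thesis using \<open>a \<in> S\<close> chr_ne by (auto simp: S_def)
      qed
    next
      have mixed: "inc a w" if a: "a \<in> {c1, c2}" and w: "w \<in> ch r - {b}" for a w
      proof -
        have "\<not> prefix (pi a) (pi w)" using prefix_length_le lc[OF a] chr_len[of w] w by fastforce
        moreover have "\<not> prefix (pi w) (pi a)"
        proof
          assume "prefix (pi w) (pi a)"
          then have "pi a ! 1 = pi w ! 1" using prefix_nth_eq[of "pi w" "pi a" 1] chr_len[of w] w by simp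
          then show False using c1b[OF a] ch_root[of w] w by auto
        qed
        ultimately show ?thesis unfolding inc_def by simp
      qed
      fix a c assume "a \<in> S" "c \<in> S" "a \<noteq> c"
      then show "inc a c"
        unfolding S_def
        using mixed inc_sym chr_inc same_len_inc[of c1 c2] same_len_inc[of c2 c1] pc ne
        by auto
    qed
    then show ?thesis using card3 by simp
  qed
  then show False using c4 by simp
qed

definition br :: "'n \<Rightarrow> 'n" where "br y = pi y ! 1"

lemma lf_chr: "lf ` ch r = Pd" "inj_on lf (ch r)"
proof -
  show inj: "inj_on lf (ch r)" using chr_inc inc_lf unfolding inj_on_def by blast
  have sub: "lf ` ch r \<subseteq> Pd"
    using pendant_iff[OF notpr] lf(2) lf_ne_root chr_ne by auto
  have "card (lf ` ch r) = 3" using card_image[OF inj] card_chr by simp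
  then show "lf ` ch r = Pd" using card_seteq[OF _ sub] card3 by simp
qed

lemma br_lf: assumes "y \<in> Pd" shows "br y \<in> ch r" "lf (br y) = y"
proof -
  obtain w where w: "w \<in> ch r" "y = lf w" using assms lf_chr(1) by blast
  have "prefix (pi w) (pi y)" using lf(1) w by simp
  then have "pi y ! 1 = pi w ! 1" using prefix_nth_eq[of "pi w" "pi y" 1] chr_len[OF w(1)] by simp
  then have "br y = w" using ch_root[of w] w by (simp add: br_def)
  then show "br y \<in> ch r" "lf (br y) = y" using w by auto
qed

lemma br_inj: "inj_on br Pd"
  by (metis br_lf(2) inj_onI)

lemma br_img: "br ` Pd = ch r"
proof
  show "br ` Pd \<subseteq> ch r" using br_lf by auto
  show "ch r \<subseteq> br ` Pd"
  proof
    fix w assume w: "w \<in> ch r"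
    then have y: "lf w \<in> Pd" using lf_chr(1) by blast
    have "pi (lf w) ! 1 = pi w ! 1" using prefix_nth_eq[OF lf(1)[of w]] chr_len[OF w] by simp
    then have "br (lf w) = w" using ch_root[of w] w by (simp add: br_def)
    then show "w \<in> br ` Pd" using y by force
  qed
qed

definition a :: "'n \<Rightarrow> nat" where "a y = length (pi y) - 1"
definition anc :: "'n \<Rightarrow> nat \<Rightarrow> 'n" where "anc y h = pi y ! (a y - h)"

lemma len_a: "y \<in> Pd \<Longrightarrow> length (pi y) = Suc (a y)"
  using pi_ne[of y] by (simp add: a_def)

lemma a_ge1: "y \<in> Pd \<Longrightarrow> a y \<ge> 1"
  using pi_len2[of y] pd[of y] by (simp add: a_def)

lemma anc0: "y \<in> Pd \<Longrightarrow> anc y 0 = y"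
  using pi_nth_last[of y] by (simp add: anc_def a_def)

lemma anc_top: "anc y (a y) = r"
  using pi_nth0[of y] by (simp add: anc_def)

lemma pi_anc: "y \<in> Pd \<Longrightarrow> h \<le> a y \<Longrightarrow> pi (anc y h) = take (Suc (a y - h)) (pi y)"
  unfolding anc_def using pi_take[of "a y - h" y] len_a[of y] by simp

lemma anc_inj: "y \<in> Pd \<Longrightarrow> i \<le> a y \<Longrightarrow> j \<le> a y \<Longrightarrow> anc y i = anc y j \<Longrightarrow> i = j"
  unfolding anc_def using nth_eq_iff_index_eq[OF pi_dist[of y], of "a y - i" "a y - j"] len_a[of y]
  by auto

lemma anc_ne_root: "y \<in> Pd \<Longrightarrow> h < a y \<Longrightarrow> anc y h \<noteq> r"
  using anc_inj[of y h "a y"] anc_top[of y] by auto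

lemma nbrs_mid:
  assumes y: "y \<in> Pd" and h: "0 < h" "h < a y"
  shows "{w. E (anc y h) w} = {anc y (h - 1), anc y (h + 1)}"
proof -
  define n where "n = a y - h"
  define v where "v = anc y h"
  define c where "c = anc y (h - 1)"
  define p where "p = anc y (h + 1)"
  have la: "length (pi y) = Suc (a y)" using len_a[OF y] .
  have vr: "v \<noteq> r" unfolding v_def using anc_ne_root[OF y h(2)] .
  have pv: "pi v = take (Suc n) (pi y)" unfolding v_def n_def using pi_anc[OF y] h by simp
  have cn: "a y - (h - 1) = Suc n" using h by (simp add: n_def)
  have pc: "pi c = take (Suc (Suc n)) (pi y)" unfolding c_def using pi_anc[OF y, of "h - 1"] h cn by simp
  also have "\<dots> = take (Suc n) (pi y) @ [pi y ! Suc n]"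
    using la h by (simp add: take_Suc_conv_app_nth n_def)
  also have "pi y ! Suc n = c" using cn by (simp add: c_def anc_def)
  finally have "c \<in> ch v" using pv by (simp add: ch_def)
  then have chv: "ch v = {c}" using one_child[OF vr] by blast
  have pn: "a y - (h + 1) = n - 1" by (simp add: n_def)
  have n1: "n \<ge> 1" using h by (simp add: n_def)
  have pp: "pi p = take n (pi y)" unfolding p_def using pi_anc[OF y, of "h + 1"] h pn n1 by simp
  have "pi v = take n (pi y) @ [pi y ! n]" using pv la h by (simp add: take_Suc_conv_app_nth n_def)
  also have "pi y ! n = v" by (simp add: v_def anc_def n_def)
  finally have "pi v = pi p @ [v]" using pp by simp
  then have "pi (par v) = pi p" using pi_par[OF vr] by simp
  then have "par v = p" using pi(3) by metis
  then show ?thesis using nbrs[of v] chv vr by (auto simp: v_def c_def p_def)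
qed

lemma nbrs_mid_ne: "y \<in> Pd \<Longrightarrow> 0 < h \<Longrightarrow> h < a y \<Longrightarrow> anc y (h - 1) \<noteq> anc y (h + 1)"
proof
  assume y: "y \<in> Pd" and h: "0 < h" "h < a y" and e: "anc y (h - 1) = anc y (h + 1)"
  have "h - 1 \<le> a y" "h + 1 \<le> a y" using h by auto
  then have "h - 1 = h + 1" using anc_inj[OF y _ _ e] by blast
  then show False using h by simp
qed

lemma nbrs_leaf: "y \<in> Pd \<Longrightarrow> {w. E y w} = {anc y 1}"
proof -
  assume y: "y \<in> Pd"
  have "par y = anc y 1"
    unfolding par_def anc_def using len_a[OF y] a_ge1[OF y] by simp
  then show ?thesis using nbrs[of y] pd[OF y] by simp
qed

lemma br_anc: "y \<in> Pd \<Longrightarrow> br y = anc y (a y - 1)"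
  unfolding br_def anc_def using a_ge1[of y] by simp

lemma nbrs_root: "{w. E r w} = br ` Pd"
  using nbrs[of r] br_img by simp

lemma lf_anc: assumes y: "y \<in> Pd" and h: "h < a y" shows "lf (anc y h) = y"
proof -
  define v where "v = anc y h"
  have vr: "v \<noteq> r" using anc_ne_root[OF y h] by (simp add: v_def)
  have lv: "length (pi v) \<ge> 2" using pi_len2[OF vr] .
  have pv: "pi v = take (Suc (a y - h)) (pi y)" using pi_anc[OF y] h by (simp add: v_def)
  have ly: "lf v \<in> Pd" using pendant_iff[OF notpr] lf(2)[of v] lf_ne_root[OF vr] by simp
  have "br (lf v) = pi v ! 1" unfolding br_def using prefix_nth_eq[OF lf(1)[of v]] lv by simp
  also have "\<dots> = br y"
  proof -
    have "1 < Suc (a y - h)" using h by simp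
    then show ?thesis unfolding br_def pv by simp
  qed
  finally show ?thesis using br_inj ly y unfolding inj_on_def v_def by blast
qed

lemma cover:
  assumes vr: "v \<noteq> r"
  shows "lf v \<in> Pd \<and> (\<exists>h < a (lf v). v = anc (lf v) h)"
proof -
  define y where "y = lf v"
  have y: "y \<in> Pd" using pendant_iff[OF notpr] lf(2)[of v] lf_ne_root[OF vr] by (simp add: y_def)
  have pre: "prefix (pi v) (pi y)" using lf(1) by (simp add: y_def)
  have ll: "length (pi v) \<le> length (pi y)" using prefix_length_le[OF pre] .
  have lv: "length (pi v) \<ge> 2" using pi_len2[OF vr] .
  define h where "h = a y - (length (pi v) - 1)"
  have h: "h < a y" using ll lv len_a[OF y] by (simp add: h_def)
  have "a y - h = length (pi v) - 1" using ll lv len_a[OF y] by (simp add: h_def)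
  then have "anc y h = pi y ! (length (pi v) - 1)" by (simp add: anc_def)
  also have "\<dots> = pi v ! (length (pi v) - 1)" using prefix_nth_eq[OF pre] lv by simp
  also have "\<dots> = v" by (rule pi_nth_last)
  finally show ?thesis using y h by (auto simp: y_def)
qed

lemma gd: "y \<in> Pd \<Longrightarrow> gdist E y r = a y"
  using gdist_pi by (simp add: a_def)

end

definition K :: "nat \<Rightarrow> real \<Rightarrow> real \<Rightarrow> bool" where
  "K m c d \<longleftrightarrow> (m = 1 \<and> c = 0 \<and> d \<noteq> 0) \<or> (m = 2 \<and> c \<noteq> 0 \<and> d = 0) \<or> (m = 0 \<and> c \<noteq> 0 \<and> d = c)"

definition C12 :: "nat \<Rightarrow> nat \<Rightarrow> nat \<Rightarrow> bool" where
  "C12 m1 m2 m3 \<longleftrightarrow> (m1 = 1 \<and> m2 = 1) \<or> (m1 = 1 \<and> m3 = 1) \<or> (m2 = 1 \<and> m3 = 1) \<or>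
     (m1 = 2 \<and> m2 = 0 \<and> m3 = 0) \<or> (m2 = 2 \<and> m1 = 0 \<and> m3 = 0) \<or> (m3 = 2 \<and> m1 = 0 \<and> m2 = 0)"

lemma core_fwd:
  fixes X t1 t2 t3 c1 c2 c3 d1 d2 d3 :: real
  assumes k: "K m1 c1 d1" "K m2 c2 d2" "K m3 c3 d3"
    and e: "X = t1*c1" "X = t2*c2" "X = t3*c3" "2*X = t1*d1 + t2*d2 + t3*d3"
    and nz: "X \<noteq> 0 \<or> t1 \<noteq> 0 \<or> t2 \<noteq> 0 \<or> t3 \<noteq> 0"
  shows "C12 m1 m2 m3"
  using k unfolding K_def C12_def
  apply (elim disjE conjE)
  using e nz by (auto simp: algebra_simps)

lemma core_bwd:
  fixes c1 c2 c3 d1 d2 d3 :: real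
  assumes k: "K m1 c1 d1" "K m2 c2 d2" "K m3 c3 d3" and C: "C12 m1 m2 m3"
  shows "\<exists>X t1 t2 t3. X = t1*c1 \<and> X = t2*c2 \<and> X = t3*c3 \<and> 2*X = t1*d1 + t2*d2 + t3*d3 \<and>
     (X \<noteq> 0 \<or> t1 \<noteq> 0 \<or> t2 \<noteq> 0 \<or> t3 \<noteq> 0)"
  using C unfolding C12_def
proof (elim disjE conjE)
  assume "m1 = 1" "m2 = 1"
  then show ?thesis using k unfolding K_def
    by (intro exI[of _ 0] exI[of _ "1/d1"] exI[of _ "-1/d2"] exI[of _ 0]) auto
next
  assume "m1 = 1" "m3 = 1"
  then show ?thesis using k unfolding K_def
    by (intro exI[of _ 0] exI[of _ "1/d1"] exI[of _ 0] exI[of _ "-1/d3"]) auto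
next
  assume "m2 = 1" "m3 = 1"
  then show ?thesis using k unfolding K_def
    by (intro exI[of _ 0] exI[of _ 0] exI[of _ "1/d2"] exI[of _ "-1/d3"]) auto
next
  assume "m1 = 2" "m2 = 0" "m3 = 0"
  then show ?thesis using k unfolding K_def
    by (intro exI[of _ 1] exI[of _ "1/c1"] exI[of _ "1/c2"] exI[of _ "1/c3"]) auto
next
  assume "m2 = 2" "m1 = 0" "m3 = 0"
  then show ?thesis using k unfolding K_def
    by (intro exI[of _ 1] exI[of _ "1/c1"] exI[of _ "1/c2"] exI[of _ "1/c3"]) auto
next
  assume "m3 = 2" "m1 = 0" "m2 = 0"
  then show ?thesis using k unfolding K_def
    by (intro exI[of _ 1] exI[of _ "1/c1"] exI[of _ "1/c2"] exI[of _ "1/c3"]) auto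
qed

fun cs :: "nat \<Rightarrow> real" where
  "cs 0 = 1" | "cs (Suc 0) = 0" | "cs (Suc (Suc n)) = cs (Suc n) - cs n"

lemma cs3: "cs (n + 3) = - cs n"
  by (simp add: numeral_3_eq_3)

lemma csk: "cs (3 * k + j) = (-1) ^ k * cs j"
proof (induction k)
  case (Suc k)
  have "cs (3 * Suc k + j) = cs ((3 * k + j) + 3)" by (simp add: algebra_simps)
  also have "\<dots> = - cs (3 * k + j)" by (rule cs3)
  finally show ?case using Suc by simp
qed simp

lemma cs_K: "n \<ge> 1 \<Longrightarrow> K (n mod 3) (cs n) (cs (n - 1))"
proof -
  assume n: "n \<ge> 1"
  define k where "k = n div 3"
  have "n mod 3 = 0 \<or> n mod 3 = 1 \<or> n mod 3 = 2" by arith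
  then show ?thesis
  proof (elim disjE)
    assume m: "n mod 3 = 0"
    then have nk: "n = 3 * k" unfolding k_def by presburger
    then have k1: "k \<ge> 1" using n by simp
    have "n - 1 = 3 * (k - 1) + 2" using nk k1 by simp
    then have "cs (n - 1) = (-1) ^ (k - 1) * cs 2" using csk[of "k - 1" 2] by (simp only:)
    also have "\<dots> = (-1) ^ k" using k1 by (cases k) (auto simp: numeral_2_eq_2)
    finally have d: "cs (n - 1) = (-1) ^ k" .
    have c: "cs n = (-1) ^ k" using csk[of k 0] nk by simp
    show ?thesis unfolding K_def using m c d by simp
  next
    assume m: "n mod 3 = 1"
    then have nk: "n = 3 * k + 1" unfolding k_def by presburger
    have c: "cs n = 0" using csk[of k 1] nk by simp
    have d: "cs (n - 1) = (-1) ^ k" using csk[of k 0] nk by simp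
    show ?thesis unfolding K_def using m c d by simp
  next
    assume m: "n mod 3 = 2"
    then have nk: "n = 3 * k + 2" unfolding k_def by presburger
    have c: "cs n = - ((-1) ^ k)" using csk[of k 2] nk by (simp add: numeral_2_eq_2)
    have d: "cs (n - 1) = 0" using csk[of k 1] nk by simp
    show ?thesis unfolding K_def using m c d by simp
  qed
qed

lemma cond_equiv:
  fixes P :: "'a \<Rightarrow> bool" and g :: "'a \<Rightarrow> nat"
  assumes pe: "\<And>u. P u \<longleftrightarrow> u = p1 \<or> u = p2 \<or> u = p3"
    and d: "p1 \<noteq> p2" "p2 \<noteq> p3" "p1 \<noteq> p3"
  shows "((\<exists>u1 u2. P u1 \<and> P u2 \<and> u1 \<noteq> u2 \<and> g u1 mod 3 = 1 \<and> g u2 mod 3 = 1) \<or>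
     (\<exists>u1 u2 u3. P u1 \<and> P u2 \<and> P u3 \<and> u1 \<noteq> u2 \<and> u1 \<noteq> u3 \<and> u2 \<noteq> u3 \<and>
        g u1 mod 3 = 2 \<and> g u2 mod 3 = 0 \<and> g u3 mod 3 = 0))
    \<longleftrightarrow> C12 (g p1 mod 3) (g p2 mod 3) (g p3 mod 3)"
proof
  assume "(\<exists>u1 u2. P u1 \<and> P u2 \<and> u1 \<noteq> u2 \<and> g u1 mod 3 = 1 \<and> g u2 mod 3 = 1) \<or>
     (\<exists>u1 u2 u3. P u1 \<and> P u2 \<and> P u3 \<and> u1 \<noteq> u2 \<and> u1 \<noteq> u3 \<and> u2 \<noteq> u3 \<and>
        g u1 mod 3 = 2 \<and> g u2 mod 3 = 0 \<and> g u3 mod 3 = 0)"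
  then show "C12 (g p1 mod 3) (g p2 mod 3) (g p3 mod 3)"
  proof (elim disjE exE conjE)
    fix u1 u2 assume h: "P u1" "P u2" "u1 \<noteq> u2" "g u1 mod 3 = 1" "g u2 mod 3 = 1"
    have "u1 = p1 \<or> u1 = p2 \<or> u1 = p3" "u2 = p1 \<or> u2 = p2 \<or> u2 = p3" using h pe by auto
    then show ?thesis using h unfolding C12_def by (elim disjE) simp_all
  next
    fix u1 u2 u3 assume h: "P u1" "P u2" "P u3" "u1 \<noteq> u2" "u1 \<noteq> u3" "u2 \<noteq> u3"
      "g u1 mod 3 = 2" "g u2 mod 3 = 0" "g u3 mod 3 = 0"
    have "u1 = p1 \<or> u1 = p2 \<or> u1 = p3" "u2 = p1 \<or> u2 = p2 \<or> u2 = p3" "u3 = p1 \<or> u3 = p2 \<or> u3 = p3"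
      using h pe by auto
    then show ?thesis using h unfolding C12_def by (elim disjE) simp_all
  qed
next
  have P: "P p1" "P p2" "P p3" using pe by auto
  assume "C12 (g p1 mod 3) (g p2 mod 3) (g p3 mod 3)"
  then show "(\<exists>u1 u2. P u1 \<and> P u2 \<and> u1 \<noteq> u2 \<and> g u1 mod 3 = 1 \<and> g u2 mod 3 = 1) \<or>
     (\<exists>u1 u2 u3. P u1 \<and> P u2 \<and> P u3 \<and> u1 \<noteq> u2 \<and> u1 \<noteq> u3 \<and> u2 \<noteq> u3 \<and>
        g u1 mod 3 = 2 \<and> g u2 mod 3 = 0 \<and> g u3 mod 3 = 0)"
    unfolding C12_def
  proof (elim disjE conjE)
    assume "g p1 mod 3 = 1" "g p2 mod 3 = 1"
    then show ?thesis using P d by (intro disjI1 exI[of _ p1] exI[of _ p2]) simp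
  next
    assume "g p1 mod 3 = 1" "g p3 mod 3 = 1"
    then show ?thesis using P d by (intro disjI1 exI[of _ p1] exI[of _ p3]) simp
  next
    assume "g p2 mod 3 = 1" "g p3 mod 3 = 1"
    then show ?thesis using P d by (intro disjI1 exI[of _ p2] exI[of _ p3]) simp
  next
    assume "g p1 mod 3 = 2" "g p2 mod 3 = 0" "g p3 mod 3 = 0"
    then show ?thesis using P d by (intro disjI2 exI[of _ p1] exI[of _ p2] exI[of _ p3]) simp
  next
    assume "g p2 mod 3 = 2" "g p1 mod 3 = 0" "g p3 mod 3 = 0"
    then show ?thesis using P d by (intro disjI2 exI[of _ p2] exI[of _ p1] exI[of _ p3]) simp
  next
    assume "g p3 mod 3 = 2" "g p1 mod 3 = 0" "g p2 mod 3 = 0"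
    then show ?thesis using P d by (intro disjI2 exI[of _ p3] exI[of _ p1] exI[of _ p2]) simp
  qed
qed

lemma lap: "(laplacian E *v x) $ v = real (degree E v) * x $ v - (\<Sum>w\<in>{w. E v w}. x $ w)"
proof -
  have "(laplacian E *v x) $ v =
      (\<Sum>j\<in>UNIV. ((if v = j then real (degree E v) else 0) - (if E v j then 1 else 0)) * x $ j)"
    by (simp add: laplacian_def matrix_vector_mult_def)
  also have "\<dots> = (\<Sum>j\<in>UNIV. (if v = j then real (degree E v) * x $ j else 0)) -
      (\<Sum>j\<in>UNIV. (if E v j then x $ j else 0))"
    unfolding sum_subtractf[symmetric] by (rule sum.cong) (auto simp: algebra_simps)
  also have "(\<Sum>j\<in>UNIV. (if v = j then real (degree E v) * x $ j else 0)) = real (degree E v) * x $ v"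
    by (simp add: sum.delta)
  also have "(\<Sum>j\<in>UNIV. (if E v j then x $ j else 0)) = (\<Sum>w\<in>{w. E v w}. x $ w)"
    using sum.inter_filter[of UNIV "\<lambda>j. x $ j" "E v"] by simp
  finally show ?thesis .
qed

context spider
begin

lemma deg_root: "degree E r = 3"
  unfolding degree_def nbrs_root using card_image[OF br_inj] card3 by simp

lemma sum_root: "(\<Sum>w\<in>{w. E r w}. f w) = (\<Sum>y\<in>Pd. f (anc y (a y - 1)))"
  unfolding nbrs_root using sum.reindex[OF br_inj, of f] br_anc by simp

lemma deg_leaf: "y \<in> Pd \<Longrightarrow> degree E y = 1"
  unfolding degree_def using nbrs_leaf by simp

lemma deg_mid: "y \<in> Pd \<Longrightarrow> 0 < h \<Longrightarrow> h < a y \<Longrightarrow> degree E (anc y h) = 2"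
  unfolding degree_def using nbrs_mid nbrs_mid_ne by simp

lemma sum_mid: "y \<in> Pd \<Longrightarrow> 0 < h \<Longrightarrow> h < a y \<Longrightarrow>
    (\<Sum>w\<in>{w. E (anc y h) w}. f w) = f (anc y (h - 1)) + f (anc y (h + 1))"
  using nbrs_mid nbrs_mid_ne by simp

lemma eig_to:
  assumes "is_eigenvalue (laplacian E) 1"
  shows "\<exists>X t. (\<forall>y\<in>Pd. X = t y * cs (a y)) \<and> 2 * X = (\<Sum>y\<in>Pd. t y * cs (a y - 1)) \<and>
    (X \<noteq> 0 \<or> (\<exists>y\<in>Pd. t y \<noteq> 0))"
proof -
  obtain x where x0: "x \<noteq> 0" and ex: "laplacian E *v x = x"
    using assms unfolding is_eigenvalue_def by auto
  have eq: "real (degree E v) * x $ v - (\<Sum>w\<in>{w. E v w}. x $ w) = x $ v" for v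
    using lap[of E x v] ex by simp
  have chain: "x $ anc y h = x $ y * cs h" if y: "y \<in> Pd" and h: "h \<le> a y" for y h
    using h
  proof (induction h rule: cs.induct)
    case 1 then show ?case using anc0[OF y] by simp
  next
    case 2
    have "real (degree E y) * x $ y - (\<Sum>w\<in>{w. E y w}. x $ w) = x $ y" by (rule eq)
    then have "x $ anc y 1 = 0" using deg_leaf[OF y] nbrs_leaf[OF y] by simp
    then show ?case by simp
  next
    case (3 n)
    have h1: "0 < Suc n" "Suc n < a y" using 3 by auto
    have "real (degree E (anc y (Suc n))) * x $ anc y (Suc n) - (\<Sum>w\<in>{w. E (anc y (Suc n)) w}. x $ w)
        = x $ anc y (Suc n)" by (rule eq)
    then have "2 * x $ anc y (Suc n) - (x $ anc y n + x $ anc y (Suc (Suc n))) = x $ anc y (Suc n)"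
      using deg_mid[OF y h1] sum_mid[OF y h1, of "\<lambda>w. x $ w"] by simp
    then have "x $ anc y (Suc (Suc n)) = x $ anc y (Suc n) - x $ anc y n" by simp
    also have "\<dots> = x $ y * (cs (Suc n) - cs n)" using 3 by (simp add: algebra_simps)
    finally show ?case by simp
  qed
  have "real (degree E r) * x $ r - (\<Sum>w\<in>{w. E r w}. x $ w) = x $ r" by (rule eq)
  then have "3 * x $ r - (\<Sum>y\<in>Pd. x $ anc y (a y - 1)) = x $ r"
    using deg_root sum_root[of "\<lambda>w. x $ w"] by simp
  moreover have "(\<Sum>y\<in>Pd. x $ anc y (a y - 1)) = (\<Sum>y\<in>Pd. x $ y * cs (a y - 1))"
    by (rule sum.cong) (auto simp: chain)
  ultimately have root: "2 * x $ r = (\<Sum>y\<in>Pd. x $ y * cs (a y - 1))" by simp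
  have top: "\<forall>y\<in>Pd. x $ r = x $ y * cs (a y)"
  proof
    fix y assume y: "y \<in> Pd"
    have "x $ r = x $ anc y (a y)" using anc_top[of y] by simp
    also have "\<dots> = x $ y * cs (a y)" using chain[OF y order_refl] .
    finally show "x $ r = x $ y * cs (a y)" .
  qed
  have nz: "x $ r \<noteq> 0 \<or> (\<exists>y\<in>Pd. x $ y \<noteq> 0)"
  proof (rule ccontr)
    assume "\<not> ?thesis"
    then have z: "x $ r = 0" "\<And>y. y \<in> Pd \<Longrightarrow> x $ y = 0" by auto
    have "x $ v = 0" for v
    proof (cases "v = r")
      case True then show ?thesis using z by simp
    next
      case False
      then obtain h where h: "h < a (lf v)" "v = anc (lf v) h" and y: "lf v \<in> Pd" using cover by blast
      then show ?thesis using chain[OF y, of h] z(2)[OF y] by simp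
    qed
    then have "x = 0" by (simp add: vec_eq_iff)
    then show False using x0 by simp
  qed
  show ?thesis
    apply (rule exI[of _ "x $ r"])
    apply (rule exI[of _ "\<lambda>y. x $ y"])
    using top root nz by simp
qed

lemma eig_of:
  assumes t1: "\<forall>y\<in>Pd. X = t y * cs (a y)" and t2: "2 * X = (\<Sum>y\<in>Pd. t y * cs (a y - 1))"
    and t3: "X \<noteq> 0 \<or> (\<exists>y\<in>Pd. t y \<noteq> 0)"
  shows "is_eigenvalue (laplacian E) 1"
proof -
  define x :: "real^'n" where
    "x = (\<chi> v. if v = r then X else t (lf v) * cs (a (lf v) - (length (pi v) - 1)))"
  have val: "x $ anc y h = t y * cs h" if y: "y \<in> Pd" and h: "h \<le> a y" for y h
  proof (cases "h = a y")
    case True then show ?thesis using anc_top[of y] t1 y by (simp add: x_def)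
  next
    case False
    then have h': "h < a y" using h by simp
    have "length (pi (anc y h)) = Suc (a y - h)" using pi_anc[OF y h] len_a[OF y] by simp
    then show ?thesis using anc_ne_root[OF y h'] lf_anc[OF y h'] h by (simp add: x_def)
  qed
  have xr: "x $ r = X" by (simp add: x_def)
  have eqs: "(laplacian E *v x) $ v = x $ v" for v
  proof (cases "v = r")
    case True
    have "(laplacian E *v x) $ r = 3 * X - (\<Sum>y\<in>Pd. x $ anc y (a y - 1))"
      using lap[of E x r] deg_root sum_root[of "\<lambda>w. x $ w"] xr by simp
    also have "(\<Sum>y\<in>Pd. x $ anc y (a y - 1)) = (\<Sum>y\<in>Pd. t y * cs (a y - 1))"
      by (rule sum.cong) (auto simp: val)
    finally show ?thesis using True t2 xr by simp
  next
    case False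
    then obtain y h where yy: "y \<in> Pd" and h: "h < a y" and vh: "v = anc y h" using cover by blast
    show ?thesis
    proof (cases "h = 0")
      case True
      then have vy: "v = y" using anc0[OF yy] vh by simp
      have "x $ anc y 1 = 0" using val[OF yy, of 1] a_ge1[OF yy] by simp
      then show ?thesis using lap[of E x v] vy deg_leaf[OF yy] nbrs_leaf[OF yy] by simp
    next
      case False
      then have h1: "0 < h" "h < a y" using h by auto
      have "(laplacian E *v x) $ v = 2 * x $ v - (x $ anc y (h - 1) + x $ anc y (h + 1))"
        using lap[of E x v] deg_mid[OF yy h1] sum_mid[OF yy h1, of "\<lambda>w. x $ w"] vh by simp
      also have "\<dots> = 2 * (t y * cs h) - (t y * cs (h - 1) + t y * cs (h + 1))"
        using val[OF yy, of h] val[OF yy, of "h - 1"] val[OF yy, of "h + 1"] h1 vh by simp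
      also have "cs (h + 1) = cs h - cs (h - 1)" using h1 by (cases h) auto
      finally have "(laplacian E *v x) $ v = t y * cs h" by (simp add: algebra_simps)
      then show ?thesis using val[OF yy, of h] h1 vh by simp
    qed
  qed
  have "x \<noteq> 0"
  proof
    assume x0: "x = 0"
    show False using t3
    proof
      assume "X \<noteq> 0" then show False using x0 xr by simp
    next
      assume "\<exists>y\<in>Pd. t y \<noteq> 0"
      then obtain y where y: "y \<in> Pd" "t y \<noteq> 0" by blast
      then show False using val[OF y(1), of 0] x0 by simp
    qed
  qed
  then show ?thesis unfolding is_eigenvalue_def using eqs by (intro exI[of _ x]) (simp add: vec_eq_iff)
qed

end

context spider
begin

lemma final:
  "is_eigenvalue (laplacian E) 1 \<longleftrightarrow>
    ((\<exists>u1 u2. pendant E u1 \<and> pendant E u2 \<and> u1 \<noteq> u2 \<and>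
        gdist E u1 r mod 3 = 1 \<and> gdist E u2 r mod 3 = 1) \<or>
     (\<exists>u1 u2 u3. pendant E u1 \<and> pendant E u2 \<and> pendant E u3 \<and>
        u1 \<noteq> u2 \<and> u1 \<noteq> u3 \<and> u2 \<noteq> u3 \<and>
        gdist E u1 r mod 3 = 2 \<and> gdist E u2 r mod 3 = 0 \<and> gdist E u3 r mod 3 = 0))"
  (is "?L \<longleftrightarrow> ?R")
proof -
  obtain p1 p2 p3 where Peq: "Pd = {p1, p2, p3}" and d: "p1 \<noteq> p2" "p2 \<noteq> p3" "p1 \<noteq> p3"
    using card3 card_3_iff by metis
  have pe: "pendant E u \<longleftrightarrow> u = p1 \<or> u = p2 \<or> u = p3" for u
  proof -
    have "pendant E u \<longleftrightarrow> u \<in> Pd" by simp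
    then show ?thesis unfolding Peq by simp
  qed
  have inP: "p1 \<in> Pd" "p2 \<in> Pd" "p3 \<in> Pd" using pe by auto
  have sumP: "(\<Sum>y\<in>Pd. f y) = f p1 + f p2 + f p3" for f :: "'n \<Rightarrow> real"
    unfolding Peq using d by simp
  have k1: "K (a p1 mod 3) (cs (a p1)) (cs (a p1 - 1))" using cs_K a_ge1 inP by blast
  have k2: "K (a p2 mod 3) (cs (a p2)) (cs (a p2 - 1))" using cs_K a_ge1 inP by blast
  have k3: "K (a p3 mod 3) (cs (a p3)) (cs (a p3 - 1))" using cs_K a_ge1 inP by blast
  let ?EX = "\<exists>X t1 t2 t3. X = t1 * cs (a p1) \<and> X = t2 * cs (a p2) \<and> X = t3 * cs (a p3) \<and>
     2*X = t1 * cs (a p1 - 1) + t2 * cs (a p2 - 1) + t3 * cs (a p3 - 1) \<and>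
     (X \<noteq> 0 \<or> t1 \<noteq> 0 \<or> t2 \<noteq> 0 \<or> t3 \<noteq> 0)"
  have s1: "?L \<longleftrightarrow> ?EX"
  proof
    assume ?L
    then obtain X t where t: "\<forall>y\<in>Pd. X = t y * cs (a y)" "2 * X = (\<Sum>y\<in>Pd. t y * cs (a y - 1))"
      "X \<noteq> 0 \<or> (\<exists>y\<in>Pd. t y \<noteq> 0)" using eig_to by blast
    have nz: "X \<noteq> 0 \<or> t p1 \<noteq> 0 \<or> t p2 \<noteq> 0 \<or> t p3 \<noteq> 0" using t(3) unfolding Peq by auto
    have x1: "X = t p1 * cs (a p1)" using bspec[OF t(1) inP(1)] .
    have x2: "X = t p2 * cs (a p2)" using bspec[OF t(1) inP(2)] .
    have x3: "X = t p3 * cs (a p3)" using bspec[OF t(1) inP(3)] .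
    have sm: "2*X = t p1 * cs (a p1 - 1) + t p2 * cs (a p2 - 1) + t p3 * cs (a p3 - 1)"
      using t(2) sumP[of "\<lambda>y. t y * cs (a y - 1)"] by simp
    show ?EX
      apply (rule exI[of _ X], rule exI[of _ "t p1"], rule exI[of _ "t p2"], rule exI[of _ "t p3"])
      by (intro conjI) (rule x1, rule x2, rule x3, rule sm, rule nz)
  next
    assume ?EX
    then obtain X t1 t2 t3 where e: "X = t1 * cs (a p1)" "X = t2 * cs (a p2)" "X = t3 * cs (a p3)"
      "2*X = t1 * cs (a p1 - 1) + t2 * cs (a p2 - 1) + t3 * cs (a p3 - 1)"
      "X \<noteq> 0 \<or> t1 \<noteq> 0 \<or> t2 \<noteq> 0 \<or> t3 \<noteq> 0" by blast
    define t where "t y = (if y = p1 then t1 else if y = p2 then t2 else t3)" for y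
    have tt: "t p1 = t1" "t p2 = t2" "t p3 = t3" using d by (auto simp: t_def)
    show ?L
    proof (rule eig_of[of X t])
      show "\<forall>y\<in>Pd. X = t y * cs (a y)" unfolding Peq using e(1,2,3) tt by simp
      show "2 * X = (\<Sum>y\<in>Pd. t y * cs (a y - 1))" unfolding sumP using e(4) tt by simp
      show "X \<noteq> 0 \<or> (\<exists>y\<in>Pd. t y \<noteq> 0)" unfolding Peq using e(5) tt by auto
    qed
  qed
  have s2: "?EX \<longleftrightarrow> C12 (a p1 mod 3) (a p2 mod 3) (a p3 mod 3)"
  proof
    assume ?EX
    then obtain X t1 t2 t3 where e: "X = t1 * cs (a p1)" "X = t2 * cs (a p2)" "X = t3 * cs (a p3)"
      "2*X = t1 * cs (a p1 - 1) + t2 * cs (a p2 - 1) + t3 * cs (a p3 - 1)"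
      "X \<noteq> 0 \<or> t1 \<noteq> 0 \<or> t2 \<noteq> 0 \<or> t3 \<noteq> 0" by blast
    show "C12 (a p1 mod 3) (a p2 mod 3) (a p3 mod 3)" using core_fwd[OF k1 k2 k3 e] .
  next
    assume c: "C12 (a p1 mod 3) (a p2 mod 3) (a p3 mod 3)"
    show ?EX using core_bwd[OF k1 k2 k3 c] .
  qed
  have g: "gdist E p1 r = a p1" "gdist E p2 r = a p2" "gdist E p3 r = a p3" using gd inP by auto
  have s3: "?R \<longleftrightarrow> C12 (a p1 mod 3) (a p2 mod 3) (a p3 mod 3)"
    using cond_equiv[of "pendant E" p1 p2 p3 "\<lambda>u. gdist E u r", OF pe d] unfolding g .
  show ?thesis using s1 s2 s3 by simp
qed

end

theorem mainTheorem9: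
  fixes E :: "'n::finite \<Rightarrow> 'n \<Rightarrow> bool" and m :: 'n
  assumes "is_tree E"
    and "card {v. pendant E v} = 3"
    and "major E m"
  shows "is_eigenvalue (laplacian E) 1 \<longleftrightarrow>
    ((\<exists>u1 u2. pendant E u1 \<and> pendant E u2 \<and> u1 \<noteq> u2 \<and>
        gdist E u1 m mod 3 = 1 \<and> gdist E u2 m mod 3 = 1) \<or>
     (\<exists>u1 u2 u3. pendant E u1 \<and> pendant E u2 \<and> pendant E u3 \<and>
        u1 \<noteq> u2 \<and> u1 \<noteq> u3 \<and> u2 \<noteq> u3 \<and>
        gdist E u1 m mod 3 = 2 \<and> gdist E u2 m mod 3 = 0 \<and> gdist E u3 m mod 3 = 0))"
proof -
  interpret spider E m
  proof
    show "\<And>u v. E u v \<Longrightarrow> E v u" "\<And>v. \<not> E v v" "connected_graph E" "\<not> has_cycle E"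
      using assms(1) unfolding is_tree_def simple_graph_def by auto
    show "card {v. pendant E v} = 3" "major E m" using assms(2,3) by auto
  qed
  show ?thesis by (rule final)
qed

end
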